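(* Consider the Rasch model and the random pairing construction described in the context, and let $d_i=\sum_{j\ne i}L_{ij}$ for $i\in[m]$. Suppose that $mp\ge2$, that $m\le n^{\alpha}$ for some constant $\alpha>0$, and that $np\ge C\kappa_2^2\log(n)$ for some sufficiently large constant $C>0$. Then with probability at least $1-2n^{-10}$, for all $i\in[m]$, \[ \frac{1}{24\kappa_2}np\le d_i\le\frac32np. \]
   Context: Rasch model. Let $n$ (users) and $m$ (items) be positive integers, $\boldsymbol\zeta^\star\in\mathbb R^n$, $\boldsymbol\theta^\star\in\mathbb R^m$ unknown parameters, and $p\in(0,1]$. Each pair $(t,i)\in[n]\times[m]$ is observed independently with probability $p$; let $\mathcal E_X$ be the observed pairs and $n_t=|\{i:(t,i)\in\mathcal E_X\}|$. For $(t,i)\in\mathcal E_X$ one observes independent binary $X_{ti}$ with $\mathbb P[X_{ti}=1]=e^{\theta_i^\star}/(e^{\zeta_t^\star}+e^{\theta_i^\star})$. Define $\kappa_2\ge1$ by $\log\kappa_2=\max_{t,i}|\zeta_t^\star-\theta_i^\star|$. Random pairing: for each user $t$, randomly (uniformly, independently across users and of the responses) split the $n_t$ items user $t$ responded to into $\lfloor n_t/2\rfloor$ disjoint unordered pairs. If $\{i,j\}$ is a selected pair for user $t$, set $L^t_{ij}=L^t_{ji}=\mathbb 1\{X_{ti}\ne X_{tj}\}$; otherwise $L^t_{ij}=0$. Let $L_{ij}=\sum_{t=1}^nL^t_{ij}$. *)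

theory Defs
  imports "HOL-Probability.Probability"
begin

text \<open>Rasch model: users t < n, items i < m. Probability that X_ti = 1.\<close>
definition rasch_prob :: "(nat \<Rightarrow> real) \<Rightarrow> (nat \<Rightarrow> real) \<Rightarrow> nat \<Rightarrow> nat \<Rightarrow> real" where
  "rasch_prob \<zeta> \<theta> t i = exp (\<theta> i) / (exp (\<zeta> t) + exp (\<theta> i))"

definition kappa2 :: "nat \<Rightarrow> nat \<Rightarrow> (nat \<Rightarrow> real) \<Rightarrow> (nat \<Rightarrow> real) \<Rightarrow> real" where
  "kappa2 n m \<zeta> \<theta> = exp (Max {\<bar>\<zeta> t - \<theta> i\<bar> | t i. t < n \<and> i < m})"

definition pairings :: "nat set \<Rightarrow> nat set set set" where
  "pairings S = {P. (\<forall>e\<in>P. e \<subseteq> S \<and> card e = 2) \<and> disjoint P \<and> card P = card S div 2}"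

text \<open>Joint law of (observation pattern E, responses X, random pairings per user).
  Responses are drawn for all pairs independently; only observed ones enter the pairing.\<close>
definition rasch_pairing_pmf ::
  "nat \<Rightarrow> nat \<Rightarrow> real \<Rightarrow> (nat \<Rightarrow> real) \<Rightarrow> (nat \<Rightarrow> real) \<Rightarrow>
   ((nat \<times> nat \<Rightarrow> bool) \<times> (nat \<times> nat \<Rightarrow> bool) \<times> (nat \<Rightarrow> nat set set)) pmf" where
  "rasch_pairing_pmf n m p \<zeta> \<theta> =
     do {
       E \<leftarrow> Pi_pmf ({..<n} \<times> {..<m}) False (\<lambda>_. bernoulli_pmf p);
       X \<leftarrow> Pi_pmf ({..<n} \<times> {..<m}) False (\<lambda>(t, i). bernoulli_pmf (rasch_prob \<zeta> \<theta> t i));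
       Pr \<leftarrow> Pi_pmf {..<n} {} (\<lambda>t. pmf_of_set (pairings {i. i < m \<and> E (t, i)}));
       return_pmf (E, X, Pr)
     }"

definition Lmat :: "nat \<Rightarrow> ((nat \<times> nat \<Rightarrow> bool) \<times> (nat \<times> nat \<Rightarrow> bool) \<times> (nat \<Rightarrow> nat set set))
    \<Rightarrow> nat \<Rightarrow> nat \<Rightarrow> nat" where
  "Lmat n \<omega> i j = (case \<omega> of (E, X, Pr) \<Rightarrow>
     (\<Sum>t<n. if {i, j} \<in> Pr t \<and> X (t, i) \<noteq> X (t, j) then 1 else 0))"

definition degree :: "nat \<Rightarrow> nat \<Rightarrow> ((nat \<times> nat \<Rightarrow> bool) \<times> (nat \<times> nat \<Rightarrow> bool) \<times> (nat \<Rightarrow> nat set set))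
    \<Rightarrow> nat \<Rightarrow> real" where
  "degree n m \<omega> i = real (\<Sum>j\<in>{..<m} - {i}. Lmat n \<omega> i j)"

end

theory Submission
  imports Defs
begin

lemma pairings_finite: "finite S \<Longrightarrow> finite (pairings S)"
  by (rule finite_subset[of _ "Pow (Pow S)"]) (auto simp: pairings_def)

lemma pairing_elem: "P \<in> pairings S \<Longrightarrow> e \<in> P \<Longrightarrow> e \<subseteq> S \<and> card e = 2"
  by (auto simp: pairings_def)

lemma pairing_disj: "P \<in> pairings S \<Longrightarrow> e \<in> P \<Longrightarrow> e' \<in> P \<Longrightarrow> e \<noteq> e' \<Longrightarrow> e \<inter> e' = {}"
  by (auto simp: pairings_def disjoint_def)

lemma pairing_card: "P \<in> pairings S \<Longrightarrow> card P = card S div 2"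
  by (auto simp: pairings_def)

lemma pairings_nonempty: "finite S \<Longrightarrow> pairings S \<noteq> {}"
proof (induction "card S" arbitrary: S rule: less_induct)
  case less
  show ?case
  proof (cases "card S < 2")
    case True
    then have "{} \<in> pairings S" by (auto simp: pairings_def)
    then show ?thesis by blast
  next
    case False
    then obtain a b where ab: "a \<in> S" "b \<in> S" "a \<noteq> b"
    proof -
      have "\<not> card S \<le> Suc 0" using False by simp
      then show ?thesis using card_le_Suc0_iff_eq[OF less.prems] that by blast
    qed
    define S' where "S' = S - {a, b}"
    have cS': "card S' = card S - 2" using ab less.prems by (simp add: S'_def card_Diff_subset)
    have "finite S'" using less.prems by (simp add: S'_def)
    with less.hyps[of S'] cS' False obtain P' where P': "P' \<in> pairings S'" by fastforce
    have finP': "finite P'" using pairings_finite[OF \<open>finite S'\<close>] P'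
      by (metis finite_subset pairing_elem subsetI Pow_iff finite_Pow_iff \<open>finite S'\<close>)
    have nin: "{a, b} \<notin> P'" using pairing_elem[OF P'] by (auto simp: S'_def)
    define P where "P = insert {a, b} P'"
    have "P \<in> pairings S"
      unfolding pairings_def
    proof (intro CollectI conjI ballI)
      fix e assume "e \<in> P"
      then show "e \<subseteq> S" "card e = 2" using pairing_elem[OF P'] ab
        by (auto simp: P_def S'_def)
    next
      have h: "\<forall>e\<in>P'. a \<notin> e \<and> b \<notin> e" using pairing_elem[OF P'] by (auto simp: S'_def)
      show "disjoint P" unfolding disjoint_def
        using pairing_disj[OF P'] h by (auto simp: P_def)
    next
      show "card P = card S div 2" using finP' nin pairing_card[OF P'] cS' False
        by (simp add: P_def)
    qed
    then show ?thesis by blast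
  qed
qed

lemma pairing_Union_card:
  assumes "P \<in> pairings S" "finite S"
  shows "card (\<Union>P) = 2 * (card S div 2)" "\<Union>P \<subseteq> S"
proof -
  have "card (\<Union>P) = sum card P"
  proof (rule card_Union_disjoint)
    show "disjoint P" using assms(1) by (simp add: pairings_def)
    show "finite A" if "A \<in> P" for A
      using pairing_elem[OF assms(1) that] by (metis card.infinite zero_neq_numeral)
  qed
  also have "\<dots> = sum (\<lambda>_. 2) P" using pairing_elem[OF assms(1)] by (intro sum.cong) auto
  also have "\<dots> = 2 * card P" by simp
  finally show "card (\<Union>P) = 2 * (card S div 2)" using pairing_card[OF assms(1)] by simp
  show "\<Union>P \<subseteq> S" using pairing_elem[OF assms(1)] by auto
qed

lemma card2_elem: "card e = 2 \<Longrightarrow> i \<in> e \<Longrightarrow> \<exists>j. j \<noteq> i \<and> e = {i, j}"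
  by (auto simp: card_2_iff)

lemma pairing_partner_set:
  assumes "P \<in> pairings S" "S \<subseteq> J"
  shows "{j \<in> J - {i}. {i, j} \<in> P} = (if i \<in> \<Union>P then {THE j. j \<noteq> i \<and> {i,j} \<in> P} else {})"
proof (cases "i \<in> \<Union>P")
  case True
  then obtain e where e: "e \<in> P" "i \<in> e" by auto
  have "card e = 2" using pairing_elem[OF assms(1) e(1)] by simp
  then obtain j0 where j0: "j0 \<noteq> i" "e = {i, j0}" using card2_elem[of e i] e(2) by blast
  have uniq: "j = j0" if "j \<noteq> i" "{i, j} \<in> P" for j
  proof -
    have "{i, j} \<inter> {i, j0} \<noteq> {}" by simp
    moreover have "{i, j0} \<in> P" using e j0 by simp
    ultimately have "{i, j} = {i, j0}" using pairing_disj[OF assms(1) that(2), of "{i,j0}"] by blast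
    then show ?thesis using that j0 by (auto simp: doubleton_eq_iff)
  qed
  have P0: "{i, j0} \<in> P" using e j0 by simp
  have th: "(THE j. j \<noteq> i \<and> {i,j} \<in> P) = j0"
    apply (rule the_equality)
     apply (simp add: P0 j0(1))
    using uniq by blast
  moreover have "j0 \<in> J" using pairing_elem[OF assms(1) e(1)] j0(2) assms(2) by blast
  ultimately have "{j \<in> J - {i}. {i, j} \<in> P} = {THE j. j \<noteq> i \<and> {i,j} \<in> P}"
  proof (intro equalityI subsetI)
    fix j assume "j \<in> {j \<in> J - {i}. {i, j} \<in> P}"
    then show "j \<in> {THE j. j \<noteq> i \<and> {i,j} \<in> P}" using uniq th by auto
  next
    fix j assume "j \<in> {THE j. j \<noteq> i \<and> {i,j} \<in> P}"
    then show "j \<in> {j \<in> J - {i}. {i, j} \<in> P}" using th P0 j0(1) \<open>j0 \<in> J\<close> by auto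
  qed
  then show ?thesis using True by simp
next
  case False
  then show ?thesis by auto
qed

lemma pairing_partner_card:
  assumes "P \<in> pairings S" "S \<subseteq> J"
  shows "card {j \<in> J - {i}. {i, j} \<in> P} = (if i \<in> \<Union>P then 1 else 0)"
  using pairing_partner_set[OF assms, of i] by simp

lemma pairing_partner_le1:
  assumes "P \<in> pairings S" "S \<subseteq> J" "finite J"
  shows "card {j \<in> J - {i}. {i, j} \<in> P \<and> Q j} \<le> 1"
proof -
  have "card {j \<in> J - {i}. {i, j} \<in> P \<and> Q j} \<le> card {j \<in> J - {i}. {i, j} \<in> P}"
    by (rule card_mono) (use assms in auto)
  then show ?thesis using pairing_partner_card[OF assms(1,2), of i] by (auto split: if_splits)
qed

lemma pairing_swap:
  assumes P: "P \<in> pairings S" and iS: "i \<in> S" and kS: "k \<in> S"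
  defines "sw \<equiv> (\<lambda>x. if x = i then k else if x = k then i else x)"
  shows "(\<lambda>e. sw ` e) ` P \<in> pairings S"
proof -
  have inj: "inj sw" unfolding inj_def sw_def by auto
  have injI: "inj (\<lambda>e. sw ` e)" using inj by (simp add: inj_def inj_image_eq_iff)
  show ?thesis unfolding pairings_def
  proof (intro CollectI conjI ballI)
    fix e' assume "e' \<in> (\<lambda>e. sw ` e) ` P"
    then obtain e where e: "e \<in> P" "e' = sw ` e" by auto
    have "e \<subseteq> S" "card e = 2" using pairing_elem[OF P e(1)] by auto
    then show "e' \<subseteq> S" using e(2) iS kS by (auto simp: sw_def)
    show "card e' = 2" using e(2) \<open>card e = 2\<close> card_image[OF inj_on_subset[OF inj]] by simp
  next
    show "disjoint ((\<lambda>e. sw ` e) ` P)"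
      unfolding disjoint_def
    proof (intro ballI impI)
      fix a b assume "a \<in> (\<lambda>e. sw ` e) ` P" "b \<in> (\<lambda>e. sw ` e) ` P" "a \<noteq> b"
      then obtain a' b' where "a' \<in> P" "b' \<in> P" "a = sw ` a'" "b = sw ` b'" "a' \<noteq> b'" by auto
      then show "a \<inter> b = {}" using pairing_disj[OF P] image_Int[OF inj] by (metis image_empty)
    qed
  next
    show "card ((\<lambda>e. sw ` e) ` P) = card S div 2"
      using pairing_card[OF P] card_image[OF inj_on_subset[OF injI]] by auto
  qed
qed

lemma pairing_swap_count:
  assumes fin: "finite S" and iS: "i \<in> S" and kS: "k \<in> S"
  shows "card {P \<in> pairings S. k \<notin> \<Union>P} = card {P \<in> pairings S. i \<notin> \<Union>P}"
proof -
  define sw where "sw = (\<lambda>x. if x = i then k else if x = k then i else x)"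
  define \<Phi> where "\<Phi> = (\<lambda>P. (\<lambda>e. sw ` e) ` P)"
  have swsw: "sw (sw x) = x" for x by (auto simp: sw_def)
  have inj: "inj sw" by (metis swsw injI)
  have \<Phi>\<Phi>: "\<Phi> (\<Phi> P) = P" for P by (simp add: \<Phi>_def image_image swsw)
  have \<Phi>in: "P \<in> pairings S \<Longrightarrow> \<Phi> P \<in> pairings S" for P
    unfolding \<Phi>_def sw_def by (rule pairing_swap[OF _ iS kS])
  have U: "\<Union>(\<Phi> P) = sw ` \<Union>P" for P by (auto simp: \<Phi>_def)
  have mem: "k \<in> sw ` X \<longleftrightarrow> i \<in> X" for X
  proof -
    have "sw i = k" by (simp add: sw_def)
    then show ?thesis by (metis image_iff swsw)
  qed
  have injP: "inj \<Phi>" by (metis \<Phi>\<Phi> injI)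
  have "{P \<in> pairings S. k \<notin> \<Union>P} = \<Phi> ` {P \<in> pairings S. i \<notin> \<Union>P}"
  proof (intro equalityI subsetI)
    fix Q assume Q: "Q \<in> {P \<in> pairings S. k \<notin> \<Union>P}"
    have "\<Phi> Q \<in> {P \<in> pairings S. i \<notin> \<Union>P}"
    proof -
      have "i \<notin> sw ` \<Union>Q"
      proof
        assume "i \<in> sw ` \<Union>Q"
        then have "sw i \<in> sw ` sw ` \<Union>Q" by blast
        then have "sw i \<in> \<Union>Q" by (simp add: image_image swsw)
        moreover have "sw i = k" by (simp add: sw_def)
        ultimately have "k \<in> \<Union>Q" by simp
        then show False using Q by simp
      qed
      then have "i \<notin> \<Union>(\<Phi> Q)" using U by simp
      then show ?thesis using \<Phi>in Q by blast
    qed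
    then show "Q \<in> \<Phi> ` {P \<in> pairings S. i \<notin> \<Union>P}" by (metis \<Phi>\<Phi> imageI)
  next
    fix Q assume "Q \<in> \<Phi> ` {P \<in> pairings S. i \<notin> \<Union>P}"
    then obtain P where "P \<in> pairings S" "i \<notin> \<Union>P" "Q = \<Phi> P" by auto
    moreover have "k \<notin> \<Union>(\<Phi> P)" using U mem \<open>i \<notin> \<Union>P\<close> by simp
    ultimately show "Q \<in> {P \<in> pairings S. k \<notin> \<Union>P}" using \<Phi>in by blast
  qed
  then show ?thesis using card_image[OF inj_on_subset[OF injP]] by simp
qed

lemma pairing_cover_prob:
  assumes fin: "finite S" and iS: "i \<in> S" and c2: "card S \<ge> 2"
  shows "measure_pmf.prob (pmf_of_set (pairings S)) {P. i \<in> \<Union>P} \<ge> 2/3"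
proof -
  define PP where "PP = pairings S"
  have finP: "finite PP" and neP: "PP \<noteq> {}" using pairings_finite[OF fin] pairings_nonempty[OF fin] by (auto simp: PP_def)
  have cP: "card PP > 0" using finP neP by (simp add: card_gt_0_iff)
  have prob: "measure_pmf.prob (pmf_of_set PP) {P. i \<in> \<Union>P} = card (PP \<inter> {P. i \<in> \<Union>P}) / card PP"
    using finP neP by (simp add: measure_pmf_of_set)
  show ?thesis
  proof (cases "even (card S)")
    case True
    have "\<Union>P = S" if "P \<in> PP" for P
      using pairing_Union_card[OF that[unfolded PP_def] fin] True fin
      by (metis card_subset_eq dvd_mult_div_cancel)
    then have "PP \<inter> {P. i \<in> \<Union>P} = PP" using iS by (metis (no_types, lifting) Int_absorb2 mem_Collect_eq subsetI)
    then show ?thesis using prob cP unfolding PP_def by simp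
  next
    case False
    define N where "N k = card {P \<in> PP. k \<notin> \<Union>P}" for k
    have NN: "N k = N i" if "k \<in> S" for k
      unfolding N_def PP_def by (rule pairing_swap_count[OF fin iS that])
    have one: "card (S - \<Union>P) = 1" if "P \<in> PP" for P
    proof -
      have "card (S - \<Union>P) = card S - card (\<Union>P)"
        using pairing_Union_card[OF that[unfolded PP_def] fin] fin by (simp add: card_Diff_subset finite_subset)
      then show ?thesis using pairing_Union_card[OF that[unfolded PP_def] fin] False by presburger
    qed
    have "(\<Sum>k\<in>S. N k) = (\<Sum>k\<in>S. \<Sum>P\<in>PP. if k \<notin> \<Union>P then 1 else 0)"
    proof (intro sum.cong refl)
      fix k show "N k = (\<Sum>P\<in>PP. if k \<notin> \<Union>P then 1 else 0)"
        unfolding N_def using sum.inter_filter[OF finP, of "\<lambda>_. 1::nat" "\<lambda>P. k \<notin> \<Union>P"] by simp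
    qed
    also have "\<dots> = (\<Sum>P\<in>PP. \<Sum>k\<in>S. if k \<notin> \<Union>P then 1 else 0)" by (rule sum.swap)
    also have "\<dots> = (\<Sum>P\<in>PP. card (S - \<Union>P))"
    proof (intro sum.cong refl)
      fix P
      have "{k \<in> S. k \<notin> \<Union>P} = S - \<Union>P" by blast
      then show "(\<Sum>k\<in>S. if k \<notin> \<Union>P then 1 else 0) = card (S - \<Union>P)"
        using sum.inter_filter[OF fin, of "\<lambda>_. 1::nat" "\<lambda>k. k \<notin> \<Union>P"] by simp
    qed
    also have "\<dots> = (\<Sum>P\<in>PP. 1)" using one by (intro sum.cong) auto
    finally have sumN: "card S * N i = card PP" using NN by simp
    have split: "card (PP \<inter> {P. i \<in> \<Union>P}) + N i = card PP"
    proof -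
      have "PP = (PP \<inter> {P. i \<in> \<Union>P}) \<union> {P \<in> PP. i \<notin> \<Union>P}" by auto
      moreover have "(PP \<inter> {P. i \<in> \<Union>P}) \<inter> {P \<in> PP. i \<notin> \<Union>P} = {}" by auto
      ultimately show ?thesis unfolding N_def using finP
        by (metis (no_types, lifting) card_Un_disjoint finite_Un)
    qed
    have c3: "card S \<ge> 3" using c2 False by presburger
    have "real (card (PP \<inter> {P. i \<in> \<Union>P})) = real (card PP) - real (card PP) / real (card S)"
    proof -
      have "card S * (card (PP \<inter> {P. i \<in> \<Union>P}) + N i) = card S * card PP" using split by simp
      then have "card S * card (PP \<inter> {P. i \<in> \<Union>P}) + card PP = card S * card PP"
        using sumN by (simp add: add_mult_distrib2)
      then have "real (card S) * real (card (PP \<inter> {P. i \<in> \<Union>P})) + real (card PP) = real (card S) * real (card PP)"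
        by (metis of_nat_add of_nat_mult)
      then show ?thesis using c3 by (simp add: field_simps)
    qed
    then have "measure_pmf.prob (pmf_of_set PP) {P. i \<in> \<Union>P} = (real (card PP) - real (card PP) / real (card S)) / real (card PP)"
      using prob by simp
    also have "\<dots> = 1 - 1 / real (card S)" using cP by (simp add: diff_divide_distrib)
    finally have "measure_pmf.prob (pmf_of_set PP) {P. i \<in> \<Union>P} = 1 - 1 / real (card S)" .
    moreover have "1 / real (card S) \<le> 1/3" using c3 by (simp add: field_simps)
    ultimately show ?thesis unfolding PP_def by simp
  qed
qed

lemma Pi_pmf_nonzero_shape:
  assumes A: "finite A" and B: "finite B"
    and nz: "pmf (Pi_pmf A (\<lambda>_. d) (\<lambda>a. Pi_pmf B d (\<lambda>b. q (a,b)))) F \<noteq> 0"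
  shows "\<forall>a. a \<notin> A \<longrightarrow> F a = (\<lambda>_. d)" "\<forall>a\<in>A. \<forall>b. b \<notin> B \<longrightarrow> F a b = d"
proof -
  have *: "(\<forall>x. x \<notin> A \<longrightarrow> F x = (\<lambda>_. d)) \<and> (\<Prod>a\<in>A. pmf (Pi_pmf B d (\<lambda>b. q (a,b))) (F a)) \<noteq> 0"
    using nz by (simp add: pmf_Pi[OF A] split: if_splits)
  then show "\<forall>a. a \<notin> A \<longrightarrow> F a = (\<lambda>_. d)" by blast
  show "\<forall>a\<in>A. \<forall>b. b \<notin> B \<longrightarrow> F a b = d"
  proof (intro ballI allI impI)
    fix a b assume a: "a \<in> A" and b: "b \<notin> B"
    have "pmf (Pi_pmf B d (\<lambda>b. q (a,b))) (F a) \<noteq> 0" using * a A by auto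
    then show "F a b = d" using b by (simp add: pmf_Pi[OF B] split: if_splits)
  qed
qed

lemma Pi_pmf_prod:
  assumes A: "finite A" and B: "finite B"
  shows "Pi_pmf (A \<times> B) d q =
         map_pmf (\<lambda>F x. F (fst x) (snd x)) (Pi_pmf A (\<lambda>_. d) (\<lambda>a. Pi_pmf B d (\<lambda>b. q (a,b))))"
    (is "_ = map_pmf ?\<phi> ?M")
proof (rule pmf_eqI)
  fix X :: "'a \<times> 'b \<Rightarrow> 'c"
  have AB: "finite (A \<times> B)" using A B by simp
  have rhs: "pmf (map_pmf ?\<phi> ?M) X = measure ?M (?\<phi> -` {X})" by (rule pmf_map)
  show "pmf (Pi_pmf (A \<times> B) d q) X = pmf (map_pmf ?\<phi> ?M) X"
  proof (cases "\<forall>x. x \<notin> A \<times> B \<longrightarrow> X x = d")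
    case True
    define \<psi> where "\<psi> = (\<lambda>a. if a \<in> A then (\<lambda>b. if b \<in> B then X (a,b) else d) else (\<lambda>_. d))"
    have \<phi>\<psi>: "?\<phi> \<psi> = X"
    proof
      fix x show "?\<phi> \<psi> x = X x" using True by (cases x) (auto simp: \<psi>_def)
    qed
    have "measure ?M (?\<phi> -` {X}) = measure ?M {\<psi>}"
    proof (rule measure_prob_cong_0)
      fix F assume F: "F \<in> ?\<phi> -` {X} - {\<psi>}"
      show "pmf ?M F = 0"
      proof (rule ccontr)
        assume "pmf ?M F \<noteq> 0"
        note sh = Pi_pmf_nonzero_shape[OF A B this]
        have "F = \<psi>"
        proof (intro ext)
          fix a b
          have "F a b = X (a, b)" using F by (metis (no_types, lifting) fst_conv snd_conv vimage_singleton_eq DiffD1)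
          then show "F a b = \<psi> a b" using sh True by (auto simp: \<psi>_def)
        qed
        then show False using F by simp
      qed
    next
      fix F assume "F \<in> {\<psi>} - ?\<phi> -` {X}"
      then show "pmf ?M F = 0" using \<phi>\<psi> by simp
    qed
    also have "\<dots> = pmf ?M \<psi>" by (rule measure_pmf_single)
    also have "\<dots> = (\<Prod>a\<in>A. pmf (Pi_pmf B d (\<lambda>b. q (a,b))) (\<psi> a))"
      by (simp add: pmf_Pi[OF A] \<psi>_def)
    also have "\<dots> = (\<Prod>a\<in>A. \<Prod>b\<in>B. pmf (q (a,b)) (X (a,b)))"
      by (intro prod.cong refl) (simp add: pmf_Pi[OF B] \<psi>_def)
    also have "\<dots> = (\<Prod>x\<in>A \<times> B. pmf (q x) (X x))"
      by (simp add: prod.cartesian_product)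
    also have "\<dots> = pmf (Pi_pmf (A \<times> B) d q) X"
      using True by (simp add: pmf_Pi[OF AB])
    finally show ?thesis using rhs by simp
  next
    case False
    then obtain a0 b0 where ab0: "(a0, b0) \<notin> A \<times> B" "X (a0, b0) \<noteq> d" by auto
    have "measure ?M (?\<phi> -` {X}) = measure ?M {}"
    proof (rule measure_prob_cong_0)
      fix F assume F: "F \<in> ?\<phi> -` {X} - {}"
      show "pmf ?M F = 0"
      proof (rule ccontr)
        assume "pmf ?M F \<noteq> 0"
        note sh = Pi_pmf_nonzero_shape[OF A B this]
        have "F a0 b0 = X (a0, b0)" using F by (metis (no_types, lifting) fst_conv snd_conv vimage_singleton_eq DiffD1)
        then show False using sh ab0 by (cases "a0 \<in> A") auto
      qed
    qed simp
    moreover have "pmf (Pi_pmf (A \<times> B) d q) X = 0" using False by (subst pmf_Pi[OF AB]) auto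
    ultimately show ?thesis using rhs by simp
  qed
qed

definition user_pmf :: "nat \<Rightarrow> real \<Rightarrow> (nat \<Rightarrow> real) \<Rightarrow> (nat \<Rightarrow> real) \<Rightarrow> nat \<Rightarrow>
   ((nat \<Rightarrow> bool) \<times> (nat \<Rightarrow> bool) \<times> nat set set) pmf" where
  "user_pmf m p \<zeta> \<theta> t = do {
     e \<leftarrow> Pi_pmf {..<m} False (\<lambda>_. bernoulli_pmf p);
     x \<leftarrow> Pi_pmf {..<m} False (\<lambda>i. bernoulli_pmf (rasch_prob \<zeta> \<theta> t i));
     P \<leftarrow> pmf_of_set (pairings {i. i < m \<and> e i});
     return_pmf (e, x, P) }"

definition glue :: "(nat \<Rightarrow> (nat \<Rightarrow> bool) \<times> (nat \<Rightarrow> bool) \<times> nat set set) \<Rightarrow>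
   ((nat \<times> nat \<Rightarrow> bool) \<times> (nat \<times> nat \<Rightarrow> bool) \<times> (nat \<Rightarrow> nat set set))" where
  "glue w = (\<lambda>x. fst (w (fst x)) (snd x), \<lambda>x. fst (snd (w (fst x))) (snd x), \<lambda>t. snd (snd (w t)))"

definition d0 :: "(nat \<Rightarrow> bool) \<times> (nat \<Rightarrow> bool) \<times> nat set set" where
  "d0 = (\<lambda>_. False, \<lambda>_. False, {})"

lemma rasch_structure:
  "rasch_pairing_pmf n m p \<zeta> \<theta> = map_pmf glue (Pi_pmf {..<n} d0 (user_pmf m p \<zeta> \<theta>))"
proof -
  define PE where "PE = Pi_pmf {..<n} (\<lambda>_. False) (\<lambda>a. Pi_pmf {..<m} False (\<lambda>b. bernoulli_pmf p))"
  define PX where "PX = Pi_pmf {..<n} (\<lambda>_. False) (\<lambda>a. Pi_pmf {..<m} False (\<lambda>b. bernoulli_pmf (rasch_prob \<zeta> \<theta> a b)))"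
  define RR where "RR = (\<lambda>Ef. Pi_pmf {..<n} {} (\<lambda>t. pmf_of_set (pairings {i. i < m \<and> Ef t i})))"
  define \<phi> :: "(nat \<Rightarrow> nat \<Rightarrow> bool) \<Rightarrow> nat \<times> nat \<Rightarrow> bool" where "\<phi> = (\<lambda>F x. F (fst x) (snd x))"
  have E: "Pi_pmf ({..<n} \<times> {..<m}) False (\<lambda>_. bernoulli_pmf p) = map_pmf \<phi> PE"
    unfolding PE_def \<phi>_def by (rule Pi_pmf_prod) auto
  have X: "Pi_pmf ({..<n} \<times> {..<m}) False (\<lambda>(t, i). bernoulli_pmf (rasch_prob \<zeta> \<theta> t i)) = map_pmf \<phi> PX"
    unfolding PX_def \<phi>_def by (subst Pi_pmf_prod) auto
  have L: "rasch_pairing_pmf n m p \<zeta> \<theta> =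
     PE \<bind> (\<lambda>Ef. PX \<bind> (\<lambda>Xf. RR Ef \<bind> (\<lambda>Pr. return_pmf (\<phi> Ef, \<phi> Xf, Pr))))"
    unfolding rasch_pairing_pmf_def E X by (simp add: bind_map_pmf RR_def \<phi>_def)
  have R1: "Pi_pmf {..<n} d0 (user_pmf m p \<zeta> \<theta>) =
     PE \<bind> (\<lambda>Ef. PX \<bind> (\<lambda>Xf. RR Ef \<bind> (\<lambda>Pf. return_pmf (\<lambda>t. if t \<in> {..<n} then (Ef t, Xf t, Pf t) else d0))))"
  proof -
    have "Pi_pmf {..<n} d0 (user_pmf m p \<zeta> \<theta>) =
      Pi_pmf {..<n} (\<lambda>_. False) (\<lambda>_. Pi_pmf {..<m} False (\<lambda>_. bernoulli_pmf p)) \<bind>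
        (\<lambda>Ef. Pi_pmf {..<n} d0 (\<lambda>t. Pi_pmf {..<m} False (\<lambda>i. bernoulli_pmf (rasch_prob \<zeta> \<theta> t i)) \<bind>
           (\<lambda>x. pmf_of_set (pairings {i. i < m \<and> Ef t i}) \<bind> (\<lambda>P. return_pmf (Ef t, x, P)))))"
      unfolding user_pmf_def by (rule Pi_pmf_bind) simp
    also have "\<dots> = PE \<bind> (\<lambda>Ef. PX \<bind> (\<lambda>Xf. Pi_pmf {..<n} d0 (\<lambda>t.
           pmf_of_set (pairings {i. i < m \<and> Ef t i}) \<bind> (\<lambda>P. return_pmf (Ef t, Xf t, P)))))"
      unfolding PE_def PX_def by (intro bind_pmf_cong refl Pi_pmf_bind) simp
    also have "\<dots> = PE \<bind> (\<lambda>Ef. PX \<bind> (\<lambda>Xf. RR Ef \<bind> (\<lambda>Pf. Pi_pmf {..<n} d0 (\<lambda>t.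
           return_pmf (Ef t, Xf t, Pf t)))))"
      unfolding RR_def by (intro bind_pmf_cong refl Pi_pmf_bind) simp
    also have "\<dots> = PE \<bind> (\<lambda>Ef. PX \<bind> (\<lambda>Xf. RR Ef \<bind> (\<lambda>Pf. return_pmf (\<lambda>t. if t \<in> {..<n} then (Ef t, Xf t, Pf t) else d0))))"
      by (intro bind_pmf_cong refl) (rule Pi_pmf_return_pmf, simp)
    finally show ?thesis .
  qed
  have "map_pmf glue (Pi_pmf {..<n} d0 (user_pmf m p \<zeta> \<theta>)) =
     PE \<bind> (\<lambda>Ef. PX \<bind> (\<lambda>Xf. RR Ef \<bind> (\<lambda>Pf. return_pmf (glue (\<lambda>t. if t \<in> {..<n} then (Ef t, Xf t, Pf t) else d0)))))"
    unfolding R1 by (simp only: map_bind_pmf map_return_pmf)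
  also have "\<dots> = PE \<bind> (\<lambda>Ef. PX \<bind> (\<lambda>Xf. RR Ef \<bind> (\<lambda>Pr. return_pmf (\<phi> Ef, \<phi> Xf, Pr))))"
  proof (rule bind_pmf_cong[OF refl], rule bind_pmf_cong[OF refl], rule bind_pmf_cong[OF refl])
    fix Ef Xf Pf
    assume Ef: "Ef \<in> set_pmf PE" and Xf: "Xf \<in> set_pmf PX" and Pf: "Pf \<in> set_pmf (RR Ef)"
    have Ef': "\<forall>t. t \<notin> {..<n} \<longrightarrow> Ef t = (\<lambda>_. False)"
      using subsetD[OF set_Pi_pmf_subset[OF finite_lessThan] Ef[unfolded PE_def]] by (simp only: mem_Collect_eq)
    have Xf': "\<forall>t. t \<notin> {..<n} \<longrightarrow> Xf t = (\<lambda>_. False)"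
      using subsetD[OF set_Pi_pmf_subset[OF finite_lessThan] Xf[unfolded PX_def]] by (simp only: mem_Collect_eq)
    have Pf': "\<forall>t. t \<notin> {..<n} \<longrightarrow> Pf t = {}"
      using subsetD[OF set_Pi_pmf_subset[OF finite_lessThan] Pf[unfolded RR_def]] by (simp only: mem_Collect_eq)
    have c1: "(\<lambda>x. fst ((\<lambda>t. if t \<in> {..<n} then (Ef t, Xf t, Pf t) else d0) (fst x)) (snd x)) = \<phi> Ef"
    proof
      fix x :: "nat \<times> nat" show "fst ((\<lambda>t. if t \<in> {..<n} then (Ef t, Xf t, Pf t) else d0) (fst x)) (snd x) = \<phi> Ef x"
        using Ef' by (cases "fst x \<in> {..<n}") (simp_all add: \<phi>_def d0_def)
    qed
    have c2: "(\<lambda>x. fst (snd ((\<lambda>t. if t \<in> {..<n} then (Ef t, Xf t, Pf t) else d0) (fst x))) (snd x)) = \<phi> Xf"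
    proof
      fix x :: "nat \<times> nat" show "fst (snd ((\<lambda>t. if t \<in> {..<n} then (Ef t, Xf t, Pf t) else d0) (fst x))) (snd x) = \<phi> Xf x"
        using Xf' by (cases "fst x \<in> {..<n}") (simp_all add: \<phi>_def d0_def)
    qed
    have c3: "(\<lambda>t. snd (snd ((\<lambda>t. if t \<in> {..<n} then (Ef t, Xf t, Pf t) else d0) t))) = Pf"
    proof
      fix t show "snd (snd ((\<lambda>t. if t \<in> {..<n} then (Ef t, Xf t, Pf t) else d0) t)) = Pf t"
        using Pf' by (cases "t \<in> {..<n}") (simp_all add: d0_def)
    qed
    show "return_pmf (glue (\<lambda>t. if t \<in> {..<n} then (Ef t, Xf t, Pf t) else d0)) =
          return_pmf (\<phi> Ef, \<phi> Xf, Pf)"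
      unfolding glue_def c1 c2 c3 ..
  qed
  finally show ?thesis unfolding L by (rule sym)
qed

lemma expectation_bind_pmf:
  fixes f :: "'b \<Rightarrow> real"
  assumes "\<And>x. \<bar>f x\<bar> \<le> B"
  shows "measure_pmf.expectation (bind_pmf M N) f = measure_pmf.expectation M (\<lambda>x. measure_pmf.expectation (N x) f)"
  unfolding measure_pmf_bind
  apply (rule integral_bind[where K="count_space UNIV" and B=B and B'=1])
  using assms by (auto intro!: measure_pmf.prob_space_axioms prob_space_imp_subprob_space simp: space_subprob_algebra measure_pmf.emeasure_space_1)

lemma integrable_bounded_pmf:
  fixes f :: "'a \<Rightarrow> real"
  assumes "\<And>x. \<bar>f x\<bar> \<le> B"
  shows "integrable (measure_pmf M) f"
  by (rule measure_pmf.integrable_const_bound[where B=B]) (use assms in auto)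

lemma expectation_mono_pmf:
  fixes f g :: "'a \<Rightarrow> real"
  assumes "\<And>x. \<bar>f x\<bar> \<le> B" "\<And>x. \<bar>g x\<bar> \<le> B'" "\<And>x. x \<in> set_pmf M \<Longrightarrow> f x \<le> g x"
  shows "measure_pmf.expectation M f \<le> measure_pmf.expectation M g"
  by (rule integral_mono_AE[OF integrable_bounded_pmf[OF assms(1)] integrable_bounded_pmf[OF assms(2)]])
     (use assms(3) in \<open>auto intro!: AE_pmfI\<close>)

lemma expectation_const_pmf [simp]:
  "measure_pmf.expectation M (\<lambda>_. c::real) = c"
  by simp

lemma expectation_indicator_pmf:
  "measure_pmf.expectation M (\<lambda>x. if Q x then 1 else 0 :: real) = measure_pmf.prob M {x. Q x}"
proof -
  have "(\<lambda>x. if Q x then 1 else 0::real) = indicator {x. Q x}" by (auto simp: indicator_def fun_eq_iff)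
  then show ?thesis by simp
qed

lemma prob_bernoulli_set:
  assumes "0 \<le> a" "a \<le> 1"
  shows "measure_pmf.prob (bernoulli_pmf a) {True} = a" "measure_pmf.prob (bernoulli_pmf a) {False} = 1 - a"
    "measure_pmf.prob (bernoulli_pmf a) UNIV = 1"
  using assms by (simp_all add: measure_pmf_single)

lemma prod_two_points:
  fixes a b :: real and i j m :: nat
  assumes "i < m" "j < m" "i \<noteq> j"
  shows "(\<Prod>k<m. if k = i then a else if k = j then b else 1) = a * b"
proof -
  have "{..<m} = insert i (insert j ({..<m} - {i, j}))" using assms by auto
  then have "(\<Prod>k<m. if k = i then a else if k = j then b else 1) =
     (\<Prod>k\<in>insert i (insert j ({..<m} - {i, j})). if k = i then a else if k = j then b else 1)" by simp
  also have "\<dots> = (if i = i then a else if i = j then b else 1) * ((if j = i then a else if j = j then b else 1) *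
      (\<Prod>k\<in>{..<m} - {i, j}. if k = i then a else if k = j then b else 1))"
    using assms by (subst prod.insert, simp, simp, subst prod.insert, simp_all)
  also have "(\<Prod>k\<in>{..<m} - {i, j}. if k = i then a else if k = j then b else 1) = 1"
    by (rule prod.neutral) auto
  also have "(if i = i then a else if i = j then b else 1) * ((if j = i then a else if j = j then b else 1) * 1) = a * b"
    using assms by simp
  finally show ?thesis .
qed

lemma prod_one_point:
  fixes a b :: real and i m :: nat
  assumes "i < m"
  shows "(\<Prod>k<m. if k = i then a else b) = a * b ^ (m - 1)"
proof -
  have "(\<Prod>k<m. if k = i then a else b) = (if i = i then a else b) * (\<Prod>k\<in>{..<m} - {i}. if k = i then a else b)"
    using assms by (subst prod.remove[of _ i]) auto
  also have "(\<Prod>k\<in>{..<m} - {i}. if k = i then a else b) = (\<Prod>k\<in>{..<m} - {i}. b)"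
    by (rule prod.cong) auto
  also have "\<dots> = b ^ (m - 1)" using assms by simp
  finally show ?thesis by simp
qed

lemma prob_differ:
  fixes i j m :: nat and r :: "nat \<Rightarrow> real"
  assumes "i < m" "j < m" "i \<noteq> j" "\<And>k. 0 \<le> r k" "\<And>k. r k \<le> 1"
  shows "measure_pmf.prob (Pi_pmf {..<m} False (\<lambda>k. bernoulli_pmf (r k))) {x. x i \<noteq> x j}
         = r i * (1 - r j) + r j * (1 - r i)"
proof -
  let ?M = "Pi_pmf {..<m} False (\<lambda>k. bernoulli_pmf (r k))"
  define B1 where "B1 = (\<lambda>k. if k = i then {True} else if k = j then {False} else UNIV)"
  define B2 where "B2 = (\<lambda>k. if k = i then {False} else if k = j then {True} else UNIV)"
  have eq: "{x. x i \<noteq> x j} = Pi {..<m} B1 \<union> Pi {..<m} B2"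
    using assms(1-3) by (auto simp: B1_def B2_def Pi_def split: if_splits)
  have dis: "Pi {..<m} B1 \<inter> Pi {..<m} B2 = {}"
    using assms(1-3) by (auto simp: B1_def B2_def Pi_def split: if_splits)
  have p1: "measure_pmf.prob ?M (Pi {..<m} B1) = r i * (1 - r j)"
  proof -
    have "measure_pmf.prob ?M (Pi {..<m} B1) = (\<Prod>k<m. measure_pmf.prob (bernoulli_pmf (r k)) (B1 k))"
      by (rule measure_Pi_pmf_Pi[OF finite_lessThan])
    also have "\<dots> = (\<Prod>k<m. if k = i then r i else if k = j then 1 - r j else 1)"
      using assms by (intro prod.cong refl) (simp add: B1_def prob_bernoulli_set)
    also have "\<dots> = r i * (1 - r j)" by (rule prod_two_points[OF assms(1-3)])
    finally show ?thesis .
  qed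
  have p2: "measure_pmf.prob ?M (Pi {..<m} B2) = (1 - r i) * r j"
  proof -
    have "measure_pmf.prob ?M (Pi {..<m} B2) = (\<Prod>k<m. measure_pmf.prob (bernoulli_pmf (r k)) (B2 k))"
      by (rule measure_Pi_pmf_Pi[OF finite_lessThan])
    also have "\<dots> = (\<Prod>k<m. if k = i then 1 - r i else if k = j then r j else 1)"
      using assms by (intro prod.cong refl) (simp add: B2_def prob_bernoulli_set)
    also have "\<dots> = (1 - r i) * r j" by (rule prod_two_points[OF assms(1-3)])
    finally show ?thesis .
  qed
  show ?thesis unfolding eq
    using measure_pmf.finite_measure_Union[where A="Pi {..<m} B1" and B="Pi {..<m} B2"] dis p1 p2 by simp
qed

lemma prob_some_other:
  fixes i m :: nat
  assumes "i < m" "0 \<le> p" "p \<le> 1" "real m * p \<ge> 2"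
  shows "measure_pmf.prob (Pi_pmf {..<m} False (\<lambda>_. bernoulli_pmf p)) {e. e i \<and> (\<exists>j\<in>{..<m} - {i}. e j)} \<ge> p / 2"
proof -
  let ?M = "Pi_pmf {..<m} False (\<lambda>_. bernoulli_pmf p)"
  define B1 where "B1 = (\<lambda>k. if k = i then {True} else (UNIV :: bool set))"
  define B2 where "B2 = (\<lambda>k. if k = i then {True} else {False})"
  have eq: "{e. e i \<and> (\<exists>j\<in>{..<m} - {i}. e j)} = Pi {..<m} B1 - Pi {..<m} B2"
    using assms(1) by (auto simp: B1_def B2_def Pi_def split: if_splits)
  have sub: "Pi {..<m} B2 \<subseteq> Pi {..<m} B1" by (auto simp: B1_def B2_def Pi_def)
  have p1: "measure_pmf.prob ?M (Pi {..<m} B1) = p"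
  proof -
    have "measure_pmf.prob ?M (Pi {..<m} B1) = (\<Prod>k<m. measure_pmf.prob (bernoulli_pmf p) (B1 k))"
      by (rule measure_Pi_pmf_Pi[OF finite_lessThan])
    also have "\<dots> = (\<Prod>k<m. if k = i then p else 1)"
      using assms by (intro prod.cong refl) (simp add: B1_def prob_bernoulli_set)
    also have "\<dots> = p" using prod_one_point[OF assms(1), of p 1] by simp
    finally show ?thesis .
  qed
  have p2: "measure_pmf.prob ?M (Pi {..<m} B2) = p * (1 - p) ^ (m - 1)"
  proof -
    have "measure_pmf.prob ?M (Pi {..<m} B2) = (\<Prod>k<m. measure_pmf.prob (bernoulli_pmf p) (B2 k))"
      by (rule measure_Pi_pmf_Pi[OF finite_lessThan])
    also have "\<dots> = (\<Prod>k<m. if k = i then p else 1 - p)"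
      using assms by (intro prod.cong refl) (simp add: B2_def prob_bernoulli_set)
    also have "\<dots> = p * (1 - p) ^ (m - 1)" by (rule prod_one_point[OF assms(1)])
    finally show ?thesis .
  qed
  have "(1 - p) ^ (m - 1) \<le> exp (- p) ^ (m - 1)"
    using assms by (intro power_mono) (auto simp: exp_ge_add_one_self[of "-p", simplified] add.commute)
  also have "\<dots> = exp (- p * real (m - 1))" by (simp add: exp_of_nat_mult[symmetric] mult.commute)
  also have "\<dots> \<le> exp (-1)"
  proof -
    have "m \<ge> 1" using assms by (cases m) auto
    then have "real (m - 1) = real m - 1" by (simp add: of_nat_diff)
    then have "p * real (m - 1) = real m * p - p" by (simp add: algebra_simps)
    then have h: "p * real (m - 1) \<ge> 1" using assms by simp
    show ?thesis using h by (subst exp_le_cancel_iff) linarith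
  qed
  also have "\<dots> \<le> 1/2"
  proof -
    have "2 \<le> exp (1::real)" using exp_ge_add_one_self[of 1] by simp
    then show ?thesis by (simp add: exp_minus field_simps)
  qed
  finally have "(1 - p) ^ (m - 1) \<le> 1/2" .
  then have "p * (1 - p) ^ (m - 1) \<le> p * (1/2)" using assms by (intro mult_left_mono) auto
  moreover have "measure_pmf.prob ?M (Pi {..<m} B1 - Pi {..<m} B2) = p - p * (1 - p) ^ (m - 1)"
    using measure_pmf.finite_measure_Diff[where A="Pi {..<m} B1" and B="Pi {..<m} B2"] sub p1 p2 by simp
  ultimately show ?thesis unfolding eq by simp
qed

definition Yf :: "nat \<Rightarrow> nat \<Rightarrow> (nat \<Rightarrow> bool) \<times> (nat \<Rightarrow> bool) \<times> nat set set \<Rightarrow> real" where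
  "Yf m i u = (\<Sum>j\<in>{..<m} - {i}. if {i, j} \<in> snd (snd u) \<and> fst (snd u) i \<noteq> fst (snd u) j then 1 else 0)"

lemma degree_glue: "degree n m (glue w) i = (\<Sum>t<n. Yf m i (w t))"
proof -
  have "degree n m (glue w) i = (\<Sum>j\<in>{..<m} - {i}. \<Sum>t<n.
      (if {i, j} \<in> snd (snd (w t)) \<and> fst (snd (w t)) i \<noteq> fst (snd (w t)) j then 1 else 0 :: real))"
    unfolding degree_def Lmat_def glue_def by (simp add: of_nat_sum) (intro sum.cong refl, simp)
  also have "\<dots> = (\<Sum>t<n. Yf m i (w t))" unfolding Yf_def by (rule sum.swap)
  finally show ?thesis .
qed

lemma Yf_bound: "\<bar>Yf m i u\<bar> \<le> real m"
proof -
  have "0 \<le> Yf m i u" unfolding Yf_def by (intro sum_nonneg) auto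
  moreover have "Yf m i u \<le> (\<Sum>j\<in>{..<m} - {i}. 1)" unfolding Yf_def by (intro sum_mono) auto
  moreover have "(\<Sum>j\<in>{..<m} - {i}. 1::real) \<le> real m"
    using card_Diff1_le[of "{..<m}" i] by simp
  ultimately show ?thesis by simp
qed

lemma user_support:
  assumes "u \<in> set_pmf (user_pmf m p \<zeta> \<theta> t)"
  shows "snd (snd u) \<in> pairings {k. k < m \<and> fst u k}"
proof -
  have fin: "finite {k. k < m \<and> e k}" for e by simp
  show ?thesis using assms pairings_finite[OF fin] pairings_nonempty[OF fin]
    by (auto simp: user_pmf_def)
qed

lemma Yf_card:
  "Yf m i u = real (card {j \<in> {..<m} - {i}. {i, j} \<in> snd (snd u) \<and> fst (snd u) i \<noteq> fst (snd u) j})"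
  unfolding Yf_def
  using sum.inter_filter[of "{..<m} - {i}" "\<lambda>_. 1::real" "\<lambda>j. {i, j} \<in> snd (snd u) \<and> fst (snd u) i \<noteq> fst (snd u) j"]
  by simp

lemma Yf_01:
  assumes "u \<in> set_pmf (user_pmf m p \<zeta> \<theta> t)"
  shows "Yf m i u = 0 \<or> Yf m i u = 1" "Yf m i u \<le> (if fst u i then 1 else 0)"
proof -
  have P: "snd (snd u) \<in> pairings {k. k < m \<and> fst u k}" by (rule user_support[OF assms])
  have le1: "card {j \<in> {..<m} - {i}. {i, j} \<in> snd (snd u) \<and> fst (snd u) i \<noteq> fst (snd u) j} \<le> 1"
    by (rule pairing_partner_le1[OF P]) auto
  then show "Yf m i u = 0 \<or> Yf m i u = 1" unfolding Yf_card by (auto simp: le_Suc_eq)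
  have "{j \<in> {..<m} - {i}. {i, j} \<in> snd (snd u) \<and> fst (snd u) i \<noteq> fst (snd u) j} = {}" if "\<not> fst u i"
  proof -
    have "{i, j} \<notin> snd (snd u)" for j
    proof
      assume "{i, j} \<in> snd (snd u)"
      then have "{i, j} \<subseteq> {k. k < m \<and> fst u k}" using pairing_elem[OF P] by blast
      then show False using that by auto
    qed
    then show ?thesis by auto
  qed
  then show "Yf m i u \<le> (if fst u i then 1 else 0)"
    using le1 unfolding Yf_card by auto
qed

lemma user_pmf_swap:
  "user_pmf m p \<zeta> \<theta> t = do {
     e \<leftarrow> Pi_pmf {..<m} False (\<lambda>_. bernoulli_pmf p);
     P \<leftarrow> pmf_of_set (pairings {i. i < m \<and> e i});
     x \<leftarrow> Pi_pmf {..<m} False (\<lambda>i. bernoulli_pmf (rasch_prob \<zeta> \<theta> t i));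
     return_pmf (e, x, P) }"
  unfolding user_pmf_def by (subst bind_commute_pmf) (rule refl)

lemma expectation_user:
  fixes f :: "_ \<Rightarrow> real"
  assumes "\<And>u. \<bar>f u\<bar> \<le> B"
  shows "measure_pmf.expectation (user_pmf m p \<zeta> \<theta> t) f =
    measure_pmf.expectation (Pi_pmf {..<m} False (\<lambda>_. bernoulli_pmf p)) (\<lambda>e.
      measure_pmf.expectation (pmf_of_set (pairings {i. i < m \<and> e i})) (\<lambda>P.
        measure_pmf.expectation (Pi_pmf {..<m} False (\<lambda>i. bernoulli_pmf (rasch_prob \<zeta> \<theta> t i))) (\<lambda>x.
           f (e, x, P))))"
  unfolding user_pmf_swap
  by (simp add: expectation_bind_pmf[OF assms])

lemma prob_component:
  fixes i m :: nat
  assumes "i < m" "0 \<le> p" "p \<le> 1"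
  shows "measure_pmf.prob (Pi_pmf {..<m} False (\<lambda>_. bernoulli_pmf p)) {e. e i} = p"
proof -
  have "measure_pmf.prob (Pi_pmf {..<m} False (\<lambda>_. bernoulli_pmf p)) {e. e i} =
        measure_pmf.prob (map_pmf (\<lambda>e. e i) (Pi_pmf {..<m} False (\<lambda>_. bernoulli_pmf p))) {True}"
    by (simp add: vimage_def)
  also have "\<dots> = measure_pmf.prob (bernoulli_pmf p) {True}"
    using assms by (subst Pi_pmf_component) auto
  also have "\<dots> = p" using assms by (simp add: prob_bernoulli_set)
  finally show ?thesis .
qed

lemma EY_upper:
  assumes "i < m" "0 \<le> p" "p \<le> 1"
  shows "measure_pmf.expectation (user_pmf m p \<zeta> \<theta> t) (Yf m i) \<le> p"
proof -
  have "measure_pmf.expectation (user_pmf m p \<zeta> \<theta> t) (Yf m i) \<le>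
        measure_pmf.expectation (user_pmf m p \<zeta> \<theta> t) (\<lambda>u. if fst u i then 1 else 0)"
  proof (rule expectation_mono_pmf[where B="real m" and B'=1])
    fix u assume "u \<in> set_pmf (user_pmf m p \<zeta> \<theta> t)"
    then show "Yf m i u \<le> (if fst u i then 1 else 0)" by (rule Yf_01(2))
  qed (auto intro: Yf_bound)
  also have "\<dots> = measure_pmf.expectation (Pi_pmf {..<m} False (\<lambda>_. bernoulli_pmf p)) (\<lambda>e. if e i then 1 else 0)"
    by (subst expectation_user[of _ 1]) auto
  also have "\<dots> = p" using prob_component[OF assms] by (simp add: expectation_indicator_pmf)
  finally show ?thesis .
qed

lemma expectation_abs_bound:
  fixes f :: "'a \<Rightarrow> real"
  assumes "\<And>x. \<bar>f x\<bar> \<le> B"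
  shows "\<bar>measure_pmf.expectation M f\<bar> \<le> B"
proof -
  have "\<bar>measure_pmf.expectation M f\<bar> \<le> measure_pmf.expectation M (\<lambda>x. \<bar>f x\<bar>)"
    using integral_norm_bound[of M f] by simp
  also have "\<dots> \<le> measure_pmf.expectation M (\<lambda>x. B)"
    by (rule expectation_mono_pmf[where B=B and B'="\<bar>B\<bar>"]) (use assms in auto)
  finally show ?thesis by simp
qed

lemma rasch_prob_01: "0 \<le> rasch_prob \<zeta> \<theta> t k" "rasch_prob \<zeta> \<theta> t k \<le> 1"
  unfolding rasch_prob_def by (auto simp: field_simps add_pos_pos)

lemma EY_lower:
  fixes i m :: nat
  assumes im: "i < m" and p0: "0 \<le> p" and p1: "p \<le> 1" and mp: "real m * p \<ge> 2" and D0: "0 \<le> D"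
   and r: "\<And>j. j < m \<Longrightarrow> j \<noteq> i \<Longrightarrow>
      D \<le> rasch_prob \<zeta> \<theta> t i * (1 - rasch_prob \<zeta> \<theta> t j) + rasch_prob \<zeta> \<theta> t j * (1 - rasch_prob \<zeta> \<theta> t i)"
  shows "measure_pmf.expectation (user_pmf m p \<zeta> \<theta> t) (Yf m i) \<ge> D * (2/3) * (p/2)"
proof -
  define r' where "r' = rasch_prob \<zeta> \<theta> t"
  define X where "X = Pi_pmf {..<m} False (\<lambda>k. bernoulli_pmf (r' k))"
  define PE where "PE = Pi_pmf {..<m} False (\<lambda>_. bernoulli_pmf p)"
  define S where "S = (\<lambda>e. {k. k < m \<and> e k})"
  define cond where "cond = (\<lambda>e::nat \<Rightarrow> bool. e i \<and> (\<exists>j\<in>{..<m} - {i}. e j))"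
  have finS: "finite (S e)" for e by (simp add: S_def)
  have inner: "measure_pmf.expectation X (\<lambda>x. Yf m i (e, x, P)) \<ge> D * (if i \<in> \<Union>P then 1 else 0)"
    if P: "P \<in> pairings (S e)" for e P
  proof -
    have "measure_pmf.expectation X (\<lambda>x. Yf m i (e, x, P)) =
       (\<Sum>j\<in>{..<m} - {i}. measure_pmf.expectation X (\<lambda>x. if {i, j} \<in> P \<and> x i \<noteq> x j then 1 else 0))"
      unfolding Yf_def by (subst Bochner_Integration.integral_sum) (auto intro!: integrable_bounded_pmf[where B=1])
    also have "\<dots> \<ge> (\<Sum>j\<in>{..<m} - {i}. if {i, j} \<in> P then D else 0)"
    proof (intro sum_mono)
      fix j assume j: "j \<in> {..<m} - {i}"
      show "(if {i, j} \<in> P then D else 0) \<le> measure_pmf.expectation X (\<lambda>x. if {i, j} \<in> P \<and> x i \<noteq> x j then 1 else 0)"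
      proof (cases "{i, j} \<in> P")
        case True
        have "measure_pmf.expectation X (\<lambda>x. if {i, j} \<in> P \<and> x i \<noteq> x j then 1 else 0)
              = measure_pmf.prob X {x. x i \<noteq> x j}"
          using True by (simp add: expectation_indicator_pmf)
        also have "\<dots> = r' i * (1 - r' j) + r' j * (1 - r' i)"
          unfolding X_def by (rule prob_differ) (use im j in \<open>auto simp: r'_def rasch_prob_01\<close>)
        finally show ?thesis using True r[of j] j by (simp add: r'_def)
      qed simp
    qed
    also have "(\<Sum>j\<in>{..<m} - {i}. if {i, j} \<in> P then D else 0) = D * real (card {j \<in> {..<m} - {i}. {i, j} \<in> P})"
      using sum.inter_filter[of "{..<m} - {i}" "\<lambda>_. D" "\<lambda>j. {i, j} \<in> P"] by (simp add: mult.commute)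
    also have "card {j \<in> {..<m} - {i}. {i, j} \<in> P} = (if i \<in> \<Union>P then 1 else 0)"
      by (rule pairing_partner_card[OF P]) (auto simp: S_def)
    finally have "D * real (if i \<in> \<Union>P then 1 else 0) \<le> measure_pmf.expectation X (\<lambda>x. Yf m i (e, x, P))" .
    then show ?thesis by (cases "i \<in> \<Union>P") (simp_all only: if_True if_False of_nat_1 of_nat_0)
  qed
  have middle: "measure_pmf.expectation (pmf_of_set (pairings (S e))) (\<lambda>P. measure_pmf.expectation X (\<lambda>x. Yf m i (e, x, P)))
      \<ge> D * (2/3) * (if cond e then 1 else 0)" for e
  proof -
    have "measure_pmf.expectation (pmf_of_set (pairings (S e))) (\<lambda>P. measure_pmf.expectation X (\<lambda>x. Yf m i (e, x, P)))
        \<ge> measure_pmf.expectation (pmf_of_set (pairings (S e))) (\<lambda>P. D * (if i \<in> \<Union>P then 1 else 0))"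
    proof (rule expectation_mono_pmf[where B="\<bar>D\<bar>" and B'="real m"])
      fix P assume "P \<in> set_pmf (pmf_of_set (pairings (S e)))"
      then have "P \<in> pairings (S e)" using pairings_finite[OF finS] pairings_nonempty[OF finS] by simp
      then show "D * (if i \<in> \<Union>P then 1 else 0) \<le> measure_pmf.expectation X (\<lambda>x. Yf m i (e, x, P))"
        by (rule inner)
    qed (auto intro!: expectation_abs_bound Yf_bound)
    also have "measure_pmf.expectation (pmf_of_set (pairings (S e))) (\<lambda>P. D * (if i \<in> \<Union>P then 1 else 0))
       = D * measure_pmf.prob (pmf_of_set (pairings (S e))) {P. i \<in> \<Union>P}"
      by (simp add: expectation_indicator_pmf)
    also have "D * measure_pmf.prob (pmf_of_set (pairings (S e))) {P. i \<in> \<Union>P} \<ge> D * (2/3) * (if cond e then 1 else 0)"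
    proof (cases "cond e")
      case True
      then obtain j where j: "j \<in> {..<m} - {i}" "e j" "e i" by (auto simp: cond_def)
      have "{i, j} \<subseteq> S e" using j im by (auto simp: S_def)
      then have "card {i, j} \<le> card (S e)" by (rule card_mono[OF finS])
      then have c2: "card (S e) \<ge> 2" using j by simp
      have "measure_pmf.prob (pmf_of_set (pairings (S e))) {P. i \<in> \<Union>P} \<ge> 2/3"
        by (rule pairing_cover_prob[OF finS _ c2]) (use j im in \<open>auto simp: S_def\<close>)
      then have "D * (2/3) \<le> D * measure_pmf.prob (pmf_of_set (pairings (S e))) {P. i \<in> \<Union>P}"
        using D0 by (rule mult_left_mono)
      then show ?thesis using True by simp
    qed (simp add: D0)
    finally show ?thesis .
  qed
  have "measure_pmf.expectation (user_pmf m p \<zeta> \<theta> t) (Yf m i) =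
     measure_pmf.expectation PE (\<lambda>e. measure_pmf.expectation (pmf_of_set (pairings (S e)))
        (\<lambda>P. measure_pmf.expectation X (\<lambda>x. Yf m i (e, x, P))))"
    unfolding PE_def S_def X_def r'_def by (rule expectation_user[OF Yf_bound])
  also have "\<dots> \<ge> measure_pmf.expectation PE (\<lambda>e. D * (2/3) * (if cond e then 1 else 0))"
  proof (rule expectation_mono_pmf[where B="\<bar>D\<bar>" and B'="real m"])
    fix e show "D * (2/3) * (if cond e then 1 else 0) \<le> measure_pmf.expectation (pmf_of_set (pairings (S e)))
        (\<lambda>P. measure_pmf.expectation X (\<lambda>x. Yf m i (e, x, P)))" by (rule middle)
  qed (auto intro!: expectation_abs_bound Yf_bound)
  also have "measure_pmf.expectation PE (\<lambda>e. D * (2/3) * (if cond e then 1 else 0)) =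
     D * (2/3) * measure_pmf.prob PE {e. cond e}"
    by (simp add: expectation_indicator_pmf)
  also have "D * (2/3) * measure_pmf.prob PE {e. cond e} \<ge> D * (2/3) * (p/2)"
    using prob_some_other[OF im p0 p1 mp] D0 unfolding PE_def cond_def
    by (intro mult_left_mono) auto
  finally show ?thesis .
qed

lemma expectation_cong_pmf:
  fixes f g :: "'a \<Rightarrow> real"
  assumes "\<And>x. x \<in> set_pmf M \<Longrightarrow> f x = g x"
  shows "measure_pmf.expectation M f = measure_pmf.expectation M g"
  by (rule integral_cong_AE) (use assms in \<open>auto intro!: AE_pmfI\<close>)

lemma expectation_01:
  fixes Y :: "'a \<Rightarrow> real"
  assumes "\<And>u. u \<in> set_pmf M \<Longrightarrow> Y u = 0 \<or> Y u = 1" "\<And>u. \<bar>Y u\<bar> \<le> B"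
  shows "0 \<le> measure_pmf.expectation M Y" "measure_pmf.expectation M Y \<le> 1"
proof -
  have "measure_pmf.expectation M (\<lambda>_. 0) \<le> measure_pmf.expectation M Y"
    by (rule expectation_mono_pmf[where B=0 and B'=B]) (use assms in \<open>auto\<close>, metis order.refl zero_less_one less_imp_le)
  then show "0 \<le> measure_pmf.expectation M Y" by simp
  have "measure_pmf.expectation M Y \<le> measure_pmf.expectation M (\<lambda>_. 1)"
    by (rule expectation_mono_pmf[where B=B and B'=1]) (use assms in \<open>auto\<close>, metis order.refl zero_less_one less_imp_le)
  then show "measure_pmf.expectation M Y \<le> 1" by simp
qed

lemma chernoff_mgf:
  fixes U :: "nat \<Rightarrow> 'a pmf" and Y :: "'a \<Rightarrow> real" and l :: real
  assumes Y01: "\<And>t u. u \<in> set_pmf (U t) \<Longrightarrow> Y u = 0 \<or> Y u = 1" and YB: "\<And>u. \<bar>Y u\<bar> \<le> B"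
  shows "measure_pmf.expectation (Pi_pmf {..<n} d U) (\<lambda>w. exp (l * (\<Sum>t<n. Y (w t))))
     \<le> exp ((exp l - 1) * (\<Sum>t<n. measure_pmf.expectation (U t) Y))"
proof -
  define q where "q t = measure_pmf.expectation (U t) Y" for t
  have q01: "0 \<le> q t" "q t \<le> 1" for t unfolding q_def by (rule expectation_01[OF Y01 YB], assumption)+
  have "(\<lambda>w. exp (l * (\<Sum>t<n. Y (w t)))) = (\<lambda>w. \<Prod>t<n. exp (l * Y (w t)))"
    by (simp add: sum_distrib_left exp_sum)
  have "measure_pmf.expectation (Pi_pmf {..<n} d U) (\<lambda>w. exp (l * (\<Sum>t<n. Y (w t))))
      = (\<Prod>t<n. measure_pmf.expectation (U t) (\<lambda>u. exp (l * Y u)))"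
  proof -
    have bnd: "\<bar>exp (l * Y u)\<bar> \<le> exp (\<bar>l\<bar> * B)" for u
    proof -
      have "l * Y u \<le> \<bar>l\<bar> * \<bar>Y u\<bar>" by (metis abs_ge_self abs_mult)
      also have "\<dots> \<le> \<bar>l\<bar> * B" by (intro mult_left_mono YB) auto
      finally show ?thesis by simp
    qed
    show ?thesis
      by (simp only: \<open>(\<lambda>w. exp (l * (\<Sum>t<n. Y (w t)))) = (\<lambda>w. \<Prod>t<n. exp (l * Y (w t)))\<close>)
         (rule expectation_prod_Pi_pmf, simp, rule integrable_bounded_pmf[OF bnd], simp)
  qed
  also have "\<dots> = (\<Prod>t<n. 1 + (exp l - 1) * q t)"
  proof (rule prod.cong[OF refl])
    fix t
    have "measure_pmf.expectation (U t) (\<lambda>u. exp (l * Y u)) = measure_pmf.expectation (U t) (\<lambda>u. 1 + (exp l - 1) * Y u)"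
      by (rule expectation_cong_pmf) (use Y01 in force)
    also have "\<dots> = 1 + (exp l - 1) * q t"
      unfolding q_def
      by (subst Bochner_Integration.integral_add) (auto intro!: integrable_bounded_pmf[OF YB])
    finally show "measure_pmf.expectation (U t) (\<lambda>u. exp (l * Y u)) = 1 + (exp l - 1) * q t" .
  qed
  also have "\<dots> \<le> (\<Prod>t<n. exp ((exp l - 1) * q t))"
  proof (rule prod_mono)
    fix t
    have "0 \<le> (1 - q t) + q t * exp l" using q01[of t] by (intro add_nonneg_nonneg mult_nonneg_nonneg) auto
    then show "0 \<le> 1 + (exp l - 1) * q t \<and> 1 + (exp l - 1) * q t \<le> exp ((exp l - 1) * q t)"
      using exp_ge_add_one_self[of "(exp l - 1) * q t"] by (simp add: algebra_simps)
  qed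
  also have "\<dots> = exp ((exp l - 1) * (\<Sum>t<n. q t))" by (simp add: exp_sum sum_distrib_left)
  finally show ?thesis unfolding q_def .
qed

lemma chernoff_upper:
  fixes U :: "nat \<Rightarrow> 'a pmf" and Y :: "'a \<Rightarrow> real" and l :: real
  assumes Y01: "\<And>t u. u \<in> set_pmf (U t) \<Longrightarrow> Y u = 0 \<or> Y u = 1" and YB: "\<And>u. \<bar>Y u\<bar> \<le> B" and l: "l > 0"
  shows "measure_pmf.prob (Pi_pmf {..<n} d U) {w. a \<le> (\<Sum>t<n. Y (w t))}
     \<le> exp ((exp l - 1) * (\<Sum>t<n. measure_pmf.expectation (U t) Y) - l * a)"
proof -
  let ?W = "Pi_pmf {..<n} d U"
  let ?S = "\<lambda>w. \<Sum>t<n. Y (w t)"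
  have "measure_pmf.prob ?W {w. a \<le> ?S w} \<le> measure_pmf.prob ?W {w \<in> space (measure_pmf ?W). exp (l * ?S w) \<ge> exp (l * a)}"
    by (rule measure_pmf.finite_measure_mono) (use l in auto)
  also have "\<dots> \<le> measure_pmf.expectation ?W (\<lambda>w. exp (l * ?S w)) / exp (l * a)"
  proof (rule integral_Markov_inequality_measure[where A=UNIV])
    have "\<bar>?S w\<bar> \<le> real n * B" for w
    proof -
      have "\<bar>?S w\<bar> \<le> (\<Sum>t<n. \<bar>Y (w t)\<bar>)" by (rule sum_abs)
      also have "\<dots> \<le> (\<Sum>t<n. B)" by (intro sum_mono YB)
      finally show ?thesis by simp
    qed
    then show "integrable (measure_pmf ?W) (\<lambda>w. exp (l * ?S w))"
      by (intro integrable_bounded_pmf[where B="exp (l * (real n * B))"])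
         (use l in \<open>auto intro!: mult_left_mono simp: abs_le_iff\<close>)
  qed auto
  also have "\<dots> \<le> exp ((exp l - 1) * (\<Sum>t<n. measure_pmf.expectation (U t) Y)) / exp (l * a)"
    by (intro divide_right_mono chernoff_mgf[OF Y01 YB]) auto
  also have "\<dots> = exp ((exp l - 1) * (\<Sum>t<n. measure_pmf.expectation (U t) Y) - l * a)"
    by (simp add: exp_diff)
  finally show ?thesis .
qed

lemma chernoff_lower:
  fixes U :: "nat \<Rightarrow> 'a pmf" and Y :: "'a \<Rightarrow> real"
  assumes Y01: "\<And>t u. u \<in> set_pmf (U t) \<Longrightarrow> Y u = 0 \<or> Y u = 1" and YB: "\<And>u. \<bar>Y u\<bar> \<le> B"
  shows "measure_pmf.prob (Pi_pmf {..<n} d U) {w. (\<Sum>t<n. Y (w t)) \<le> b}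
     \<le> exp ((exp (-1) - 1) * (\<Sum>t<n. measure_pmf.expectation (U t) Y) + b)"
proof -
  let ?W = "Pi_pmf {..<n} d U"
  let ?S = "\<lambda>w. \<Sum>t<n. Y (w t)"
  have "measure_pmf.prob ?W {w. ?S w \<le> b} \<le> measure_pmf.prob ?W {w \<in> space (measure_pmf ?W). exp ((-1) * ?S w) \<ge> exp (-b)}"
    by (rule measure_pmf.finite_measure_mono) auto
  also have "\<dots> \<le> measure_pmf.expectation ?W (\<lambda>w. exp ((-1) * ?S w)) / exp (-b)"
  proof (rule integral_Markov_inequality_measure[where A=UNIV])
    have "\<bar>?S w\<bar> \<le> real n * B" for w
    proof -
      have "\<bar>?S w\<bar> \<le> (\<Sum>t<n. \<bar>Y (w t)\<bar>)" by (rule sum_abs)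
      also have "\<dots> \<le> (\<Sum>t<n. B)" by (intro sum_mono YB)
      finally show ?thesis by simp
    qed
    then show "integrable (measure_pmf ?W) (\<lambda>w. exp ((-1) * ?S w))"
      by (intro integrable_bounded_pmf[where B="exp (real n * B)"]) (auto simp: abs_le_iff)
  qed auto
  also have "\<dots> \<le> exp ((exp (-1) - 1) * (\<Sum>t<n. measure_pmf.expectation (U t) Y)) / exp (-b)"
    by (intro divide_right_mono chernoff_mgf[OF Y01 YB]) auto
  also have "\<dots> = exp ((exp (-1) - 1) * (\<Sum>t<n. measure_pmf.expectation (U t) Y) - (-b))"
    by (rule exp_diff[symmetric])
  also have "\<dots> = exp ((exp (-1) - 1) * (\<Sum>t<n. measure_pmf.expectation (U t) Y) + b)"
    by simp
  finally show ?thesis .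
qed

lemma kappa_facts:
  assumes "n \<ge> 1" "m \<ge> 1"
  shows "kappa2 n m \<zeta> \<theta> \<ge> 1" "\<And>t k. t < n \<Longrightarrow> k < m \<Longrightarrow> \<bar>\<zeta> t - \<theta> k\<bar> \<le> ln (kappa2 n m \<zeta> \<theta>)"
proof -
  define A where "A = {\<bar>\<zeta> t - \<theta> i\<bar> | t i. t < n \<and> i < m}"
  have A_eq: "A = (\<lambda>(t, i). \<bar>\<zeta> t - \<theta> i\<bar>) ` ({..<n} \<times> {..<m})" by (auto simp: A_def)
  have finA: "finite A" unfolding A_eq by simp
  have mem: "\<bar>\<zeta> t - \<theta> k\<bar> \<in> A" if "t < n" "k < m" for t k using that by (auto simp: A_def)
  have le: "\<bar>\<zeta> t - \<theta> k\<bar> \<le> Max A" if "t < n" "k < m" for t k by (rule Max_ge[OF finA mem[OF that]])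
  have k: "kappa2 n m \<zeta> \<theta> = exp (Max A)" by (simp add: kappa2_def A_def)
  have "0 \<le> Max A" using le[of 0 0] assms by (meson abs_ge_zero order_trans less_le_trans zero_less_one le_less_trans less_le)
  then show "kappa2 n m \<zeta> \<theta> \<ge> 1" unfolding k by simp
  show "\<And>t k. t < n \<Longrightarrow> k < m \<Longrightarrow> \<bar>\<zeta> t - \<theta> k\<bar> \<le> ln (kappa2 n m \<zeta> \<theta>)"
    unfolding k using le by simp
qed

lemma rasch_bounds:
  fixes \<kappa> :: real
  assumes "\<kappa> > 0" "\<bar>\<zeta> t - \<theta> k\<bar> \<le> ln \<kappa>"
  shows "1 / (1 + \<kappa>) \<le> rasch_prob \<zeta> \<theta> t k" "rasch_prob \<zeta> \<theta> t k \<le> 1 - 1 / (1 + \<kappa>)"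
proof -
  have e1: "exp (\<zeta> t - \<theta> k) \<le> \<kappa>" using assms by (metis abs_le_iff exp_le_cancel_iff exp_ln)
  have e2: "exp (\<theta> k - \<zeta> t) \<le> \<kappa>" using assms by (metis abs_le_iff exp_le_cancel_iff exp_ln minus_diff_eq)
  have A: "exp (\<zeta> t) \<le> \<kappa> * exp (\<theta> k)"
    using mult_right_mono[OF e1, of "exp (\<theta> k)"] by (simp add: exp_diff)
  have B: "exp (\<theta> k) \<le> \<kappa> * exp (\<zeta> t)"
    using mult_right_mono[OF e2, of "exp (\<zeta> t)"] by (simp add: exp_diff)
  have pos: "0 < exp (\<zeta> t) + exp (\<theta> k)" by (simp add: add_pos_pos)
  show "1 / (1 + \<kappa>) \<le> rasch_prob \<zeta> \<theta> t k"
    unfolding rasch_prob_def using A assms(1) pos by (simp add: field_simps)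
  have "1 - rasch_prob \<zeta> \<theta> t k = exp (\<zeta> t) / (exp (\<zeta> t) + exp (\<theta> k))"
    unfolding rasch_prob_def using pos by (simp add: field_simps)
  moreover have "1 / (1 + \<kappa>) \<le> exp (\<zeta> t) / (exp (\<zeta> t) + exp (\<theta> k))"
    using B assms(1) pos by (simp add: field_simps)
  ultimately show "rasch_prob \<zeta> \<theta> t k \<le> 1 - 1 / (1 + \<kappa>)" by simp
qed

lemma differ_bound:
  fixes a b \<kappa> :: real
  assumes k: "\<kappa> \<ge> 1" and s: "s = 1 / (1 + \<kappa>)" and "s \<le> a" "a \<le> 1 - s" "s \<le> b" "b \<le> 1 - s"
  shows "1 / (2 * \<kappa>) \<le> a * (1 - b) + b * (1 - a)"
proof -
  have "(a - s) * (1 - s - b) \<ge> 0" "(b - s) * (1 - s - a) \<ge> 0"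
    using assms by (auto intro!: mult_nonneg_nonneg)
  moreover have "a * (1 - b) + b * (1 - a) - 2 * s * (1 - s) = (a - s) * (1 - s - b) + (b - s) * (1 - s - a)"
    by (simp add: algebra_simps)
  ultimately have 1: "2 * s * (1 - s) \<le> a * (1 - b) + b * (1 - a)" by linarith
  have "2 * s * (1 - s) = 2 * \<kappa> / ((1 + \<kappa>) * (1 + \<kappa>))" using k unfolding s by (simp add: field_simps)
  moreover have "1 / (2 * \<kappa>) \<le> 2 * \<kappa> / ((1 + \<kappa>) * (1 + \<kappa>))"
  proof -
    have "(1 + \<kappa>) * (1 + \<kappa>) \<le> (2 * \<kappa>) * (2 * \<kappa>)" using k by (intro mult_mono) auto
    then show ?thesis using k by (simp add: field_simps)
  qed
  ultimately show ?thesis using 1 by linarith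
qed

theorem lemma2:
  fixes \<alpha> :: real
  assumes "\<alpha> > 0"
  shows "\<exists>C>0. \<forall>(n::nat) (m::nat) (p::real) (\<zeta>::nat \<Rightarrow> real) (\<theta>::nat \<Rightarrow> real).
     n \<ge> 1 \<longrightarrow> 0 < p \<longrightarrow> p \<le> 1 \<longrightarrow> real m * p \<ge> 2 \<longrightarrow> real m \<le> real n powr \<alpha> \<longrightarrow>
     real n * p \<ge> C * (kappa2 n m \<zeta> \<theta>)\<^sup>2 * ln (real n) \<longrightarrow>
     measure_pmf.prob (rasch_pairing_pmf n m p \<zeta> \<theta>)
       {\<omega>. \<forall>i<m. real n * p / (24 * kappa2 n m \<zeta> \<theta>) \<le> degree n m \<omega> i
                 \<and> degree n m \<omega> i \<le> 3 / 2 * real n * p}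
     \<ge> 1 - 2 * real n powr (-10)"
proof -
  define C where "C = 24 * (\<alpha> + 10)"
  have C0: "C > 0" using assms by (simp add: C_def)
  show ?thesis
  proof (intro exI[of _ C] conjI allI impI)
    show "C > 0" by (rule C0)
    fix n m :: nat and p :: real and \<zeta> \<theta> :: "nat \<Rightarrow> real"
    assume n1: "n \<ge> 1" and p0: "0 < p" and p1: "p \<le> 1" and mp: "real m * p \<ge> 2"
      and mn: "real m \<le> real n powr \<alpha>" and np: "real n * p \<ge> C * (kappa2 n m \<zeta> \<theta>)\<^sup>2 * ln (real n)"
    define \<kappa> where "\<kappa> = kappa2 n m \<zeta> \<theta>"
    define a where "a = 3 / 2 * real n * p"
    define b where "b = real n * p / (24 * \<kappa>)"
    define good where "good = {\<omega>. \<forall>i<m. b \<le> degree n m \<omega> i \<and> degree n m \<omega> i \<le> a}"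
    have goal_eq: "{\<omega>. \<forall>i<m. real n * p / (24 * kappa2 n m \<zeta> \<theta>) \<le> degree n m \<omega> i
                 \<and> degree n m \<omega> i \<le> 3 / 2 * real n * p} = good"
      by (simp add: good_def a_def b_def \<kappa>_def)
    have main: "measure_pmf.prob (rasch_pairing_pmf n m p \<zeta> \<theta>) good \<ge> 1 - 2 * real n powr (-10)"
    proof (cases "n = 1")
      case True
      have h: "0 \<le> measure_pmf.prob (rasch_pairing_pmf n m p \<zeta> \<theta>) X" for X by simp
      have "1 - 2 * real n powr (-10) \<le> 0" using True by simp
      then show ?thesis using h by (meson order_trans)
    next
      case False
      then have n2: "n \<ge> 2" using n1 by simp
      have lnn: "ln (real n) > 0" using n2 by simp
      have m2: "m \<ge> 1"
      proof (rule ccontr)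
        assume "\<not> m \<ge> 1" then have "m = 0" by simp
        then show False using mp by simp
      qed
      have k1: "\<kappa> \<ge> 1" unfolding \<kappa>_def by (rule kappa_facts(1)[OF n1 m2])
      have kb: "\<bar>\<zeta> t - \<theta> k\<bar> \<le> ln \<kappa>" if "t < n" "k < m" for t k
        unfolding \<kappa>_def by (rule kappa_facts(2)[OF n1 m2 that])
      define U where "U = user_pmf m p \<zeta> \<theta>"
      define W where "W = Pi_pmf {..<n} d0 U"
      define S where "S i w = (\<Sum>t<n. Yf m i (w t))" for i w
      have Y01: "\<And>t u. u \<in> set_pmf (U t) \<Longrightarrow> Yf m i u = 0 \<or> Yf m i u = 1" for i
        unfolding U_def by (rule Yf_01(1))
      have key: "exp (- (\<alpha> + 10) * ln (real n)) \<ge> exp (- (real n * p / (24 * \<kappa>)))"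
      proof -
        have "C * \<kappa>\<^sup>2 * ln (real n) \<le> real n * p" using np by (simp add: \<kappa>_def)
        then have "24 * (\<alpha> + 10) * (\<kappa> * \<kappa>) * ln (real n) \<le> real n * p" by (simp add: C_def power2_eq_square)
        moreover have "24 * (\<alpha> + 10) * \<kappa> * ln (real n) \<le> 24 * (\<alpha> + 10) * (\<kappa> * \<kappa>) * ln (real n)"
          using k1 assms lnn by (intro mult_right_mono mult_left_mono) auto
        moreover have "24 * (\<alpha> + 10) * ln (real n) \<le> 24 * (\<alpha> + 10) * \<kappa> * ln (real n)"
          using k1 assms lnn by (intro mult_right_mono) auto
        ultimately have "24 * \<kappa> * ((\<alpha> + 10) * ln (real n)) \<le> real n * p" using k1 by (simp add: algebra_simps)
        then have "(\<alpha> + 10) * ln (real n) \<le> real n * p / (24 * \<kappa>)" using k1 by (simp add: field_simps)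
        then have "- (real n * p / (24 * \<kappa>)) \<le> - (\<alpha> + 10) * ln (real n)" by linarith
        then show ?thesis by (subst exp_le_cancel_iff)
      qed
      have bad: "measure_pmf.prob W ({w. S i w \<le> b} \<union> {w. a \<le> S i w}) \<le> 2 * exp (- (\<alpha> + 10) * ln (real n))"
        if i: "i < m" for i
      proof -
        define Q where "Q = (\<Sum>t<n. measure_pmf.expectation (U t) (Yf m i))"
        have Qup: "Q \<le> real n * p"
        proof -
          have "Q \<le> (\<Sum>t<n. p)" unfolding Q_def U_def using i p0 p1 by (intro sum_mono EY_upper) auto
          then show ?thesis by simp
        qed
        have Qlow: "Q \<ge> real n * p / (6 * \<kappa>)"
        proof -
          have "(\<Sum>t<n. 1 / (2 * \<kappa>) * (2/3) * (p/2)) \<le> Q" unfolding Q_def U_def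
          proof (intro sum_mono EY_lower[OF i])
            fix t assume t: "t \<in> {..<n}"
            show "0 \<le> p" "p \<le> 1" "2 \<le> real m * p" "0 \<le> 1 / (2 * \<kappa>)" using p0 p1 mp k1 by auto
            fix j assume j: "j < m" "j \<noteq> i"
            show "1 / (2 * \<kappa>) \<le> rasch_prob \<zeta> \<theta> t i * (1 - rasch_prob \<zeta> \<theta> t j) + rasch_prob \<zeta> \<theta> t j * (1 - rasch_prob \<zeta> \<theta> t i)"
              using k1 kb[of t i] kb[of t j] t i j rasch_bounds[of \<kappa> \<zeta> t \<theta>]
              by (intro differ_bound[OF k1 refl]) auto
          qed
          then show ?thesis using k1 by (simp add: field_simps)
        qed
        have Q0: "Q \<ge> 0" using Qlow p0 k1 by (smt (verit) divide_nonneg_pos mult_nonneg_nonneg of_nat_0_le_iff)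
        have up: "measure_pmf.prob W {w. a \<le> S i w} \<le> exp (- (real n * p / (24 * \<kappa>)))"
        proof -
          have "measure_pmf.prob W {w. a \<le> S i w} \<le> exp ((exp (1/4) - 1) * Q - 1/4 * a)"
            unfolding W_def S_def Q_def by (rule chernoff_upper[OF Y01 Yf_bound]) auto
          also have "\<dots> \<le> exp (- (real n * p / (24 * \<kappa>)))"
          proof -
            have e: "exp (1/4::real) \<le> 1 + 1/4 + (1/4)\<^sup>2" by (rule exp_bound) auto
            have e0: "exp (1/4::real) \<ge> 1" by simp
            have "(exp (1/4) - 1) * Q \<le> (5/16) * (real n * p)"
            proof -
              have "(exp (1/4) - 1) * Q \<le> (5/16) * Q" using e Q0 by (intro mult_right_mono) (auto simp: power2_eq_square)
              also have "\<dots> \<le> (5/16) * (real n * p)" using Qup by simp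
              finally show ?thesis .
            qed
            moreover have "real n * p / (24 * \<kappa>) \<le> real n * p / 16"
              using k1 p0 by (intro divide_left_mono) auto
            ultimately have "(exp (1/4) - 1) * Q - 1/4 * a \<le> - (real n * p / (24 * \<kappa>))"
              unfolding a_def by linarith
            then show ?thesis by (subst exp_le_cancel_iff)
          qed
          finally show ?thesis .
        qed
        have low: "measure_pmf.prob W {w. S i w \<le> b} \<le> exp (- (real n * p / (24 * \<kappa>)))"
        proof -
          have "measure_pmf.prob W {w. S i w \<le> b} \<le> exp ((exp (-1) - 1) * Q + b)"
            unfolding W_def S_def Q_def by (rule chernoff_lower[OF Y01 Yf_bound])
          also have "\<dots> \<le> exp (- (real n * p / (24 * \<kappa>)))"
          proof -
            have "exp (-1::real) \<le> 1/2"
            proof -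
              have "2 \<le> exp (1::real)" using exp_ge_add_one_self[of 1] by simp
              then show ?thesis by (simp add: exp_minus field_simps)
            qed
            then have "(exp (-1) - 1) * Q \<le> (-1/2) * Q" using Q0 by (intro mult_right_mono) auto
            also have "\<dots> \<le> (-1/2) * (real n * p / (6 * \<kappa>))" using Qlow by linarith
            finally have h1: "(exp (-1) - 1) * Q \<le> (-1/2) * (real n * p / (6 * \<kappa>))" .
            have h2: "real n * p / (6 * \<kappa>) = 4 * (real n * p / (24 * \<kappa>))" using k1 by (simp add: field_simps)
            have "(exp (-1) - 1) * Q + b \<le> - (real n * p / (24 * \<kappa>))"
              unfolding b_def using h1 h2 by linarith
            then show ?thesis by simp
          qed
          finally show ?thesis .
        qed
        have "measure_pmf.prob W ({w. S i w \<le> b} \<union> {w. a \<le> S i w}) \<le>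
              measure_pmf.prob W {w. S i w \<le> b} + measure_pmf.prob W {w. a \<le> S i w}"
          by (rule measure_Un_le) auto
        then show ?thesis using up low key by linarith
      qed
      have pre: "glue -` good = {w. \<forall>i<m. b \<le> S i w \<and> S i w \<le> a}"
        by (simp add: good_def S_def degree_glue)
      have "measure_pmf.prob (rasch_pairing_pmf n m p \<zeta> \<theta>) good = measure_pmf.prob W (glue -` good)"
        by (simp add: rasch_structure W_def U_def)
      also have "\<dots> = 1 - measure_pmf.prob W (UNIV - glue -` good)"
        using measure_pmf.prob_compl[of "glue -` good" W] by simp
      finally have P1: "measure_pmf.prob (rasch_pairing_pmf n m p \<zeta> \<theta>) good = 1 - measure_pmf.prob W (UNIV - glue -` good)" .
      have P2: "measure_pmf.prob W (UNIV - glue -` good) \<le> (\<Sum>i<m. 2 * exp (- (\<alpha> + 10) * ln (real n)))"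
      proof -
        have "UNIV - glue -` good \<subseteq> (\<Union>i<m. {w. S i w \<le> b} \<union> {w. a \<le> S i w})"
          unfolding pre by auto
        then have "measure_pmf.prob W (UNIV - glue -` good) \<le> measure_pmf.prob W (\<Union>i<m. {w. S i w \<le> b} \<union> {w. a \<le> S i w})"
          by (rule measure_pmf.finite_measure_mono) auto
        also have "\<dots> \<le> (\<Sum>i<m. measure_pmf.prob W ({w. S i w \<le> b} \<union> {w. a \<le> S i w}))"
          by (rule measure_pmf.finite_measure_subadditive_finite) auto
        also have "\<dots> \<le> (\<Sum>i<m. 2 * exp (- (\<alpha> + 10) * ln (real n)))"
          by (intro sum_mono bad) auto
        finally show ?thesis .
      qed
      have "(\<Sum>i<m. 2 * exp (- (\<alpha> + 10) * ln (real n))) = 2 * (real m * exp (- (\<alpha> + 10) * ln (real n)))"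
        by simp
      also have "\<dots> \<le> 2 * (real n powr \<alpha> * exp (- (\<alpha> + 10) * ln (real n)))"
        using mn by (intro mult_left_mono mult_right_mono) auto
      also have "real n powr \<alpha> * exp (- (\<alpha> + 10) * ln (real n)) = real n powr (-10)"
        using n1 by (simp add: powr_def exp_add[symmetric] algebra_simps)
      finally have P3: "(\<Sum>i<m. 2 * exp (- (\<alpha> + 10) * ln (real n))) \<le> 2 * real n powr (-10)" .
      show ?thesis using P1 P2 P3 by linarith
    qed
    then show "measure_pmf.prob (rasch_pairing_pmf n m p \<zeta> \<theta>)
       {\<omega>. \<forall>i<m. real n * p / (24 * kappa2 n m \<zeta> \<theta>) \<le> degree n m \<omega> i
                 \<and> degree n m \<omega> i \<le> 3 / 2 * real n * p}
     \<ge> 1 - 2 * real n powr (-10)" unfolding goal_eq .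
  qed
qed


end
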